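(* $\mathfrak{cp}(\mathsf{null}\setminus\{\emptyset\},\subseteq)=\operatorname{cof}(\mathsf{null})$.
   Context: $\mathsf{null}$ is the ideal of Lebesgue measure zero subsets of $2^\omega$, here ordered by inclusion. For a poset $(P,\le)$, $F\subseteq P$ is a comparable family if for every $p\in P$ there is $q\in F$ with $p\le q$ or $q\le p$; $\mathfrak{cp}(P)$ is the minimal size of a comparable family. $\operatorname{cof}(\mathsf{null})$ is the minimal size of a family $\mathcal{F}\subseteq\mathsf{null}$ such that every null set is contained in some member of $\mathcal{F}$. *)

theory Defs
  imports "HOL-Probability.Probability"
begin

definition cantor_measure :: "(nat \<Rightarrow> bool) measure" where
  "cantor_measure = PiM UNIV (\<lambda>_. measure_pmf (bernoulli_pmf (1/2)))"

definition null_ideal :: "(nat \<Rightarrow> bool) set set" where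
  "null_ideal = {A. \<exists>B\<in>null_sets cantor_measure. A \<subseteq> B}"

definition comparable_family :: "'a set \<Rightarrow> ('a \<Rightarrow> 'a \<Rightarrow> bool) \<Rightarrow> 'a set \<Rightarrow> bool" where
  "comparable_family P le F \<longleftrightarrow> F \<subseteq> P \<and> (\<forall>p\<in>P. \<exists>q\<in>F. le p q \<or> le q p)"

definition min_card :: "('a set \<Rightarrow> bool) \<Rightarrow> 'a rel" where
  "min_card Q = card_of (SOME F. Q F \<and> (\<forall>F'. Q F' \<longrightarrow> ordLeq2 (card_of F) (card_of F')))"

definition cp :: "'a set \<Rightarrow> ('a \<Rightarrow> 'a \<Rightarrow> bool) \<Rightarrow> 'a rel" where
  "cp P le = min_card (comparable_family P le)"

definition cof_null :: "(nat \<Rightarrow> bool) set rel" where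
  "cof_null = min_card (\<lambda>F. F \<subseteq> null_ideal \<and> (\<forall>N\<in>null_ideal. \<exists>B\<in>F. N \<subseteq> B))"

end

theory Submission
  imports Defs
begin


definition tr :: "(nat \<Rightarrow> bool) \<Rightarrow> (nat \<Rightarrow> bool) \<Rightarrow> (nat \<Rightarrow> bool)" where
  "tr t x = (\<lambda>i. x i \<noteq> t i)"

lemma tr_tr[simp]: "tr t (tr t x) = x" by (auto simp: tr_def)

abbreviation "BM \<equiv> measure_pmf (bernoulli_pmf (1/2))"

lemma cantor_prob: "prob_space cantor_measure"
  unfolding cantor_measure_def by (intro prob_space_PiM) (simp add: prob_space_measure_pmf)

lemma space_cantor[simp]: "space cantor_measure = UNIV"
  unfolding cantor_measure_def by (simp add: space_PiM)

lemma sets_cantor: "sets cantor_measure = sets (PiM UNIV (\<lambda>_. BM))"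
  unfolding cantor_measure_def by simp

lemma tr_meas: "tr t \<in> measurable cantor_measure cantor_measure"
  unfolding cantor_measure_def
  apply (rule measurable_PiM_single')
  apply (simp_all add: tr_def)
  done

lemma bern_card: "emeasure BM S = ennreal (card S / 2)"
  by (simp add: emeasure_measure_pmf_finite ennreal_of_nat_eq_real_of_nat)

lemma bern_flip: "emeasure BM ((\<lambda>b. b \<noteq> c) -` S) = emeasure BM S"
proof -
  define f where "f = (\<lambda>b::bool. b \<noteq> c)"
  have inv: "f (f b) = b" for b unfolding f_def by (cases b; cases c) simp_all
  have inj: "inj f"
  proof (rule injI)
    fix x y assume "f x = f y" then have "f (f x) = f (f y)" by simp
    then show "x = y" by (simp add: inv)
  qed
  have "f -` S = f ` S"
  proof (rule set_eqI, rule iffI)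
    fix x assume "x \<in> f -` S" then have "f x \<in> S" by simp
    then show "x \<in> f ` S" using image_eqI[of x f "f x" S] inv[of x] by simp
  next
    fix x assume "x \<in> f ` S" then obtain y where "y \<in> S" "x = f y" by blast
    then show "x \<in> f -` S" using inv[of y] by simp
  qed
  then have "card (f -` S) = card S" using card_image[OF inj_on_subset[OF inj]] by simp
  then show ?thesis by (simp add: bern_card f_def)
qed

lemma tr_distr: "distr cantor_measure cantor_measure (tr t) = cantor_measure"
  unfolding cantor_measure_def
proof (rule measure_eqI_PiM_infinite[symmetric, OF refl])
  interpret prob_space "PiM UNIV (\<lambda>_::nat. BM)"
    by (intro prob_space_PiM) (simp add: prob_space_measure_pmf)
  show "finite_measure (PiM UNIV (\<lambda>_::nat. BM))" by unfold_locales
  show "sets (distr (PiM UNIV (\<lambda>_. BM)) (PiM UNIV (\<lambda>_. BM)) (tr t)) = sets (PiM UNIV (\<lambda>_. BM))"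
    by simp
  fix J :: "nat set" and A assume J: "finite J" "J \<subseteq> UNIV" and A: "\<And>i. i \<in> J \<Longrightarrow> A i \<in> sets BM"
  have pre: "tr t -` prod_emb UNIV (\<lambda>_. BM) J (Pi\<^sub>E J A) \<inter> space (PiM UNIV (\<lambda>_. BM))
      = prod_emb UNIV (\<lambda>_. BM) J (Pi\<^sub>E J (\<lambda>j. (\<lambda>b. b \<noteq> t j) -` A j))"
    by (auto simp: prod_emb_def space_PiM PiE_iff tr_def)
  have "emeasure (PiM UNIV (\<lambda>_. BM)) (prod_emb UNIV (\<lambda>_. BM) J (Pi\<^sub>E J A)) = (\<Prod>j\<in>J. emeasure BM (A j))"
    using J by (intro emeasure_PiM_emb) (auto simp: prob_space_measure_pmf)
  also have "\<dots> = (\<Prod>j\<in>J. emeasure BM ((\<lambda>b. b \<noteq> t j) -` A j))"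
    by (simp only: bern_flip)
  also have "\<dots> = emeasure (PiM UNIV (\<lambda>_. BM)) (prod_emb UNIV (\<lambda>_. BM) J (Pi\<^sub>E J (\<lambda>j. (\<lambda>b. b \<noteq> t j) -` A j)))"
    using J by (intro emeasure_PiM_emb[symmetric]) (auto simp: prob_space_measure_pmf)
  also have "\<dots> = emeasure (distr (PiM UNIV (\<lambda>_. BM)) (PiM UNIV (\<lambda>_. BM)) (tr t)) (prod_emb UNIV (\<lambda>_. BM) J (Pi\<^sub>E J A))"
    apply (subst emeasure_distr)
      apply (rule tr_meas[unfolded cantor_measure_def])
     apply (rule sets_PiM_I) using J apply auto[3]
    apply (simp only: pre)
    done
  finally show "emeasure (PiM UNIV (\<lambda>_. BM)) (prod_emb UNIV (\<lambda>_. BM) J (Pi\<^sub>E J A)) = emeasure (distr (PiM UNIV (\<lambda>_. BM)) (PiM UNIV (\<lambda>_. BM)) (tr t)) (prod_emb UNIV (\<lambda>_. BM) J (Pi\<^sub>E J A))" .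
qed

lemma tr_img: "tr t ` B = tr t -` B"
proof (rule set_eqI, rule iffI)
  fix x assume "x \<in> tr t ` B" then obtain y where "y \<in> B" "x = tr t y" by blast
  then show "x \<in> tr t -` B" by simp
next
  fix x assume "x \<in> tr t -` B" then have "tr t x \<in> B" by simp
  then show "x \<in> tr t ` B" using image_eqI[of x "tr t" "tr t x" B] by simp
qed

lemma tr_null: assumes "B \<in> null_sets cantor_measure" shows "tr t ` B \<in> null_sets cantor_measure"
proof -
  have img: "tr t ` B = tr t -` B \<inter> space cantor_measure"
    by (simp add: tr_img)
  have "B \<in> sets cantor_measure" using assms by auto
  then have "emeasure cantor_measure (tr t -` B \<inter> space cantor_measure) = emeasure (distr cantor_measure cantor_measure (tr t)) B"
    by (simp add: emeasure_distr tr_meas)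
  also have "\<dots> = 0" using assms by (simp add: tr_distr null_setsD1)
  moreover have "tr t -` B \<inter> space cantor_measure \<in> sets cantor_measure"
    using measurable_sets[OF tr_meas \<open>B \<in> sets cantor_measure\<close>] .
  ultimately show ?thesis unfolding img by (auto intro: null_setsI)
qed

lemma tr_null_ideal: assumes "N \<in> null_ideal" shows "tr t ` N \<in> null_ideal"
proof -
  obtain B where "B \<in> null_sets cantor_measure" "N \<subseteq> B" using assms unfolding null_ideal_def by blast
  then have "tr t ` B \<in> null_sets cantor_measure" "tr t ` N \<subseteq> tr t ` B" by (auto intro: tr_null)
  then show ?thesis unfolding null_ideal_def by blast
qed



definition cyl :: "bool list \<Rightarrow> (nat \<Rightarrow> bool) set" where
  "cyl xs = {x. \<forall>i<length xs. x i = xs ! i}"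

definition pre :: "(nat \<Rightarrow> bool) \<Rightarrow> nat \<Rightarrow> bool list" where
  "pre x n = map x [0..<n]"

lemma len_pre[simp]: "length (pre x n) = n" by (simp add: pre_def)

lemma in_cyl_pre[simp]: "x \<in> cyl (pre x n)" by (simp add: cyl_def pre_def)

lemma cyl_pre_iff: "y \<in> cyl (pre x n) \<longleftrightarrow> (\<forall>i<n. y i = x i)"
  by (simp add: cyl_def pre_def)

lemma cyl_pre_mono: "n \<le> m \<Longrightarrow> cyl (pre x m) \<subseteq> cyl (pre x n)"
  by (auto simp: cyl_pre_iff)

lemma cyl_emb: "cyl xs = prod_emb UNIV (\<lambda>_. BM) {..<length xs} (Pi\<^sub>E {..<length xs} (\<lambda>i. {xs ! i}))"
proof (rule set_eqI)
  fix x :: "nat \<Rightarrow> bool"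
  show "x \<in> cyl xs \<longleftrightarrow> x \<in> prod_emb UNIV (\<lambda>_. BM) {..<length xs} (Pi\<^sub>E {..<length xs} (\<lambda>i. {xs ! i}))"
    unfolding prod_emb_iff restrict_PiE_iff cyl_def mem_Collect_eq
    by (simp add: extensional_def Ball_def)
qed

lemma cyl_sets: "cyl xs \<in> sets cantor_measure"
  unfolding cyl_emb cantor_measure_def by (rule sets_PiM_I) auto

lemma cyl_emeasure: "emeasure cantor_measure (cyl xs) = ennreal ((1/2) ^ length xs)"
proof -
  have "emeasure cantor_measure (cyl xs) = (\<Prod>i\<in>{..<length xs}. emeasure BM {xs ! i})"
    unfolding cyl_emb cantor_measure_def
    by (intro emeasure_PiM_emb) (auto simp: prob_space_measure_pmf)
  also have "\<dots> = (\<Prod>i\<in>{..<length xs}. ennreal (1/2))"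
    by (simp add: emeasure_pmf_single)
  also have "\<dots> = ennreal (1/2) ^ length xs"
    by (simp only: prod_constant card_lessThan)
  also have "\<dots> = ennreal ((1/2) ^ length xs)"
    by (subst ennreal_power) auto
  finally show ?thesis .
qed

definition isopen :: "(nat \<Rightarrow> bool) set \<Rightarrow> bool" where
  "isopen A \<longleftrightarrow> (\<forall>x\<in>A. \<exists>n. cyl (pre x n) \<subseteq> A)"

lemma isopen_eq: assumes "isopen A" shows "A = \<Union> (cyl ` {zs. cyl zs \<subseteq> A})"
proof
  show "A \<subseteq> \<Union> (cyl ` {zs. cyl zs \<subseteq> A})"
  proof
    fix x assume "x \<in> A"
    then obtain n where "cyl (pre x n) \<subseteq> A" using assms unfolding isopen_def by blast
    then show "x \<in> \<Union> (cyl ` {zs. cyl zs \<subseteq> A})" using in_cyl_pre[of x n] by blast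
  qed
qed blast

lemma isopen_sets: assumes "isopen A" shows "A \<in> sets cantor_measure"
proof -
  have "\<Union> (cyl ` {zs. cyl zs \<subseteq> A}) \<in> sets cantor_measure"
    by (intro sets.countable_UN') (auto simp: cyl_sets)
  then show ?thesis using isopen_eq[OF assms] by simp
qed

lemma isopen_Int: "isopen A \<Longrightarrow> isopen B \<Longrightarrow> isopen (A \<inter> B)"
  unfolding isopen_def
proof (intro ballI)
  fix x assume A: "\<forall>x\<in>A. \<exists>n. cyl (pre x n) \<subseteq> A" and B: "\<forall>x\<in>B. \<exists>n. cyl (pre x n) \<subseteq> B"
    and x: "x \<in> A \<inter> B"
  obtain n m where n: "cyl (pre x n) \<subseteq> A" and m: "cyl (pre x m) \<subseteq> B" using A B x by blast
  have "cyl (pre x (max n m)) \<subseteq> A \<inter> B"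
    using cyl_pre_mono[of n "max n m" x] cyl_pre_mono[of m "max n m" x] n m by auto
  then show "\<exists>k. cyl (pre x k) \<subseteq> A \<inter> B" by blast
qed

lemma isopen_Union: assumes "\<And>i. i \<in> I \<Longrightarrow> isopen (A i)" shows "isopen (\<Union>i\<in>I. A i)"
  unfolding isopen_def
proof
  fix x assume "x \<in> (\<Union>i\<in>I. A i)"
  then obtain i where i: "i \<in> I" "x \<in> A i" by blast
  then obtain n where "cyl (pre x n) \<subseteq> A i" using assms unfolding isopen_def by blast
  then show "\<exists>n. cyl (pre x n) \<subseteq> (\<Union>i\<in>I. A i)" using i by blast
qed

lemma isopen_UNIV: "isopen UNIV" unfolding isopen_def by blast
lemma isopen_empty: "isopen {}" unfolding isopen_def by blast

lemma isopen_fin_Int: "(\<And>i. isopen (A i)) \<Longrightarrow> isopen (\<Inter>i<(N::nat). A i)"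
proof (induction N)
  case 0 then show ?case by (simp add: isopen_UNIV)
next
  case (Suc N)
  have "(\<Inter>i<Suc N. A i) = A N \<inter> (\<Inter>i<N. A i)" by (auto simp: lessThan_Suc)
  then show ?case using Suc isopen_Int by simp
qed

lemma isopen_dep: assumes "\<And>x y. (\<forall>i<n. x i = y i) \<Longrightarrow> x \<in> A \<Longrightarrow> y \<in> A" shows "isopen A"
  unfolding isopen_def
proof
  fix x assume "x \<in> A"
  have "y \<in> A" if "y \<in> cyl (pre x n)" for y
  proof -
    have "\<forall>i<n. x i = y i" using that by (simp add: cyl_pre_iff)
    then show ?thesis using assms \<open>x \<in> A\<close> by blast
  qed
  then have "cyl (pre x n) \<subseteq> A" by blast
  then show "\<exists>n. cyl (pre x n) \<subseteq> A" by blast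
qed

lemma singleton_null: "{x} \<in> null_ideal"
proof -
  define B where "B = (\<Inter>n. cyl (pre x n))"
  have Bs: "B \<in> sets cantor_measure" unfolding B_def by (intro sets.countable_INT) (auto simp: cyl_sets)
  interpret prob_space cantor_measure by (rule cantor_prob)
  have le: "measure cantor_measure B \<le> (1/2) ^ n" for n
  proof -
    have "measure cantor_measure B \<le> measure cantor_measure (cyl (pre x n))"
      by (intro finite_measure_mono) (auto simp: B_def cyl_sets)
    also have "\<dots> = (1/2) ^ n" using cyl_emeasure[of "pre x n"] by (simp add: measure_def)
    finally show ?thesis .
  qed
  have "(\<lambda>n. (1/2::real) ^ n) \<longlonglongrightarrow> 0" by (rule LIMSEQ_power_zero) simp
  then have "measure cantor_measure B \<le> 0" using le by (intro LIMSEQ_le_const) auto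
  then have "measure cantor_measure B = 0" by (simp add: measure_nonneg antisym)
  then have "B \<in> null_sets cantor_measure" using Bs by (simp add: emeasure_eq_measure null_setsI)
  moreover have "{x} \<subseteq> B" by (auto simp: B_def)
  ultimately show ?thesis unfolding null_ideal_def by blast
qed



abbreviation "CM \<equiv> cantor_measure"

definition good :: "(nat \<Rightarrow> bool) set \<Rightarrow> bool" where
  "good A \<longleftrightarrow> A \<in> sets CM \<and> (\<forall>e>0. \<exists>U V. isopen U \<and> isopen V \<and> A \<subseteq> U \<and> - V \<subseteq> A \<and> measure CM (U \<inter> V) < e)"

lemma sets_CM_sigma: "sets CM = sigma_sets UNIV (prod_algebra UNIV (\<lambda>_::nat. BM))"
  unfolding cantor_measure_def sets_PiM by simp

lemma good_basic: assumes "a \<in> prod_algebra UNIV (\<lambda>_::nat. BM)" shows "good a"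
proof -
  obtain J E where aJ: "a = prod_emb UNIV (\<lambda>_. BM) J (Pi\<^sub>E J E)" and fJ: "finite J"
    using prod_algebraE[OF assms] by metis
  obtain n where n: "\<forall>j\<in>J. j < n" using fJ finite_nat_bounded by (meson lessThan_iff subsetD)
  have dep: "(\<forall>i<n. x i = y i) \<Longrightarrow> (x \<in> a \<longleftrightarrow> y \<in> a)" for x y
  proof -
    assume h: "\<forall>i<n. x i = y i"
    have "restrict x J = restrict y J" using h n by (auto simp: restrict_def)
    then show ?thesis unfolding aJ prod_emb_iff by (simp add: extensional_def)
  qed
  have o1: "isopen a" by (rule isopen_dep[of n]) (use dep in blast)
  have o2: "isopen (- a)" by (rule isopen_dep[of n]) (use dep in blast)
  have as: "a \<in> sets CM" unfolding sets_CM_sigma using assms by (rule sigma_sets.Basic)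
  show ?thesis unfolding good_def
  proof (intro conjI allI impI)
    fix e :: real assume "e > 0"
    then show "\<exists>U V. isopen U \<and> isopen V \<and> a \<subseteq> U \<and> - V \<subseteq> a \<and> measure CM (U \<inter> V) < e"
      using o1 o2 by (intro exI[of _ a] exI[of _ "- a"]) simp
  qed (rule as)
qed

lemma good_empty: "good {}"
  unfolding good_def using isopen_empty isopen_UNIV by fastforce

lemma good_compl: assumes "good a" shows "good (UNIV - a)"
  unfolding good_def
proof (intro conjI allI impI)
  show "UNIV - a \<in> sets CM" using assms unfolding good_def
    by (metis sets.compl_sets space_cantor)
  fix e :: real assume "e > 0"
  then obtain U V where "isopen U" "isopen V" "a \<subseteq> U" "- V \<subseteq> a" "measure CM (U \<inter> V) < e"
    using assms unfolding good_def by blast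
  then show "\<exists>U V. isopen U \<and> isopen V \<and> UNIV - a \<subseteq> U \<and> - V \<subseteq> UNIV - a \<and> measure CM (U \<inter> V) < e"
    by (intro exI[of _ V] exI[of _ U]) (auto simp: Int_commute)
qed

lemma good_union: assumes g: "\<And>i::nat. good (a i)" shows "good (\<Union>i. a i)"
  unfolding good_def
proof (intro conjI allI impI)
  interpret prob_space CM by (rule cantor_prob)
  have as: "a i \<in> sets CM" for i using g unfolding good_def by blast
  then show "(\<Union>i. a i) \<in> sets CM" by blast
  fix e :: real assume e: "e > 0"
  have "\<forall>i. \<exists>U V. isopen U \<and> isopen V \<and> a i \<subseteq> U \<and> - V \<subseteq> a i \<and> measure CM (U \<inter> V) < e/4 * (1/2)^i"
  proof
    fix i :: nat
    have "e/4 * (1/2)^i > 0" using e by simp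
    then show "\<exists>U V. isopen U \<and> isopen V \<and> a i \<subseteq> U \<and> - V \<subseteq> a i \<and> measure CM (U \<inter> V) < e/4 * (1/2)^i"
      using g[of i] unfolding good_def by blast
  qed
  then obtain U V where UV: "\<And>i. isopen (U i)" "\<And>i. isopen (V i)" "\<And>i. a i \<subseteq> U i" "\<And>i. - V i \<subseteq> a i"
    "\<And>i. measure CM (U i \<inter> V i) < e/4 * (1/2)^i"
    by metis
  define W where "W N = (\<Inter>i<N. V i)" for N
  define Vi where "Vi = (\<Inter>i. V i)"
  define Ui where "Ui = (\<Union>i. U i)"
  have Wo: "isopen (W N)" for N unfolding W_def by (rule isopen_fin_Int) (rule UV)
  have Ws: "W N \<in> sets CM" for N by (rule isopen_sets[OF Wo])
  have Uio: "isopen Ui" unfolding Ui_def using isopen_Union[of UNIV U] UV by simp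
  have Uis: "Ui \<in> sets CM" by (rule isopen_sets[OF Uio])
  have Vs: "V i \<in> sets CM" for i by (rule isopen_sets[OF UV(2)])
  have Vis: "Vi \<in> sets CM" unfolding Vi_def using Vs by blast
  have UVs: "U i \<inter> V i \<in> sets CM" for i using Vs isopen_sets[OF UV(1)] by blast
  have dec: "decseq W" unfolding decseq_def W_def by auto
  have WVi: "(\<Inter>N. W N) = Vi" unfolding W_def Vi_def by auto
  have "(\<lambda>N. measure CM (W N)) \<longlonglongrightarrow> measure CM Vi"
    using finite_Lim_measure_decseq[of W] Ws dec WVi by auto
  moreover have "e/2 > 0" using e by simp
  ultimately obtain N where N: "dist (measure CM (W N)) (measure CM Vi) < e/2"
    using metric_LIMSEQ_D by blast
  have ViW: "Vi \<subseteq> W N" unfolding Vi_def W_def by auto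
  have d1: "measure CM (W N - Vi) < e/2"
  proof -
    have "\<bar>measure CM (W N) - measure CM Vi\<bar> < e/2" using N by (simp add: dist_real_def)
    then show ?thesis using finite_measure_Diff[OF Ws Vis ViW] abs_ge_self[of "measure CM (W N) - measure CM Vi"] by linarith
  qed
  have sum_g: "(\<Sum>i. e/4 * (1/2::real)^i) = e/2"
  proof -
    have "(\<Sum>i. e/4 * (1/2::real)^i) = e/4 * (\<Sum>i. (1/2::real)^i)"
      by (rule suminf_mult) simp
    also have "(\<Sum>i. (1/2::real)^i) = 2" by (subst suminf_geometric) auto
    finally show ?thesis by simp
  qed
  have summ_g: "summable (\<lambda>i. e/4 * (1/2::real)^i)" by simp
  have summ_m: "summable (\<lambda>i. measure CM (U i \<inter> V i))"
    by (rule summable_comparison_test[OF _ summ_g]) (use UV(5) in \<open>auto intro: less_imp_le\<close>)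
  have "measure CM (\<Union>i. U i \<inter> V i) \<le> (\<Sum>i. measure CM (U i \<inter> V i))"
    using finite_measure_subadditive_countably[of "\<lambda>i. U i \<inter> V i"] UVs summ_m by auto
  also have "\<dots> \<le> (\<Sum>i. e/4 * (1/2::real)^i)"
    by (rule suminf_le) (use UV(5) summ_m summ_g in \<open>auto intro: less_imp_le\<close>)
  finally have d2: "measure CM (\<Union>i. U i \<inter> V i) \<le> e/2" using sum_g by simp
  have sub: "Ui \<inter> W N \<subseteq> (\<Union>i. U i \<inter> V i) \<union> (W N - Vi)"
    unfolding Ui_def Vi_def by blast
  have "measure CM (Ui \<inter> W N) \<le> measure CM ((\<Union>i. U i \<inter> V i) \<union> (W N - Vi))"
    by (rule finite_measure_mono[OF sub]) (use UVs Ws Vis in blast)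
  also have "\<dots> \<le> measure CM (\<Union>i. U i \<inter> V i) + measure CM (W N - Vi)"
    by (rule measure_Un_le) (use UVs Ws Vis in blast)+
  finally have "measure CM (Ui \<inter> W N) < e" using d1 d2 by simp
  moreover have "(\<Union>i. a i) \<subseteq> Ui" unfolding Ui_def using UV(3) by blast
  moreover have "- W N \<subseteq> (\<Union>i. a i)" unfolding W_def using UV(4) by blast
  ultimately show "\<exists>U V. isopen U \<and> isopen V \<and> (\<Union>i. a i) \<subseteq> U \<and> - V \<subseteq> (\<Union>i. a i) \<and> measure CM (U \<inter> V) < e"
    using Uio Wo by blast
qed

lemma all_good: assumes "A \<in> sets CM" shows "good A"
proof -
  have "A \<in> sigma_sets UNIV (prod_algebra UNIV (\<lambda>_::nat. BM))" using assms sets_CM_sigma by simp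
  then show ?thesis
  proof (induction rule: sigma_sets.induct)
    case (Basic a) then show ?case by (rule good_basic)
  next
    case Empty then show ?case by (rule good_empty)
  next
    case (Compl a) then show ?case using good_compl by blast
  next
    case (Union a) then show ?case using good_union by blast
  qed
qed

lemma outer_approx: assumes "A \<in> sets CM" "e > 0"
  shows "\<exists>U. isopen U \<and> A \<subseteq> U \<and> measure CM U \<le> measure CM A + e"
proof -
  interpret prob_space CM by (rule cantor_prob)
  obtain U V where UV: "isopen U" "isopen V" "A \<subseteq> U" "- V \<subseteq> A" "measure CM (U \<inter> V) < e"
    using all_good[OF assms(1)] assms(2) unfolding good_def by blast
  have Us: "U \<in> sets CM" "V \<in> sets CM" using UV isopen_sets by auto
  have Vc: "- V \<in> sets CM" using sets.compl_sets[OF Us(2)] by (simp add: Compl_eq_Diff_UNIV)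
  have "measure CM U \<le> measure CM ((U \<inter> V) \<union> (- V))"
    by (rule finite_measure_mono) (use Us Vc in auto)
  also have "\<dots> \<le> measure CM (U \<inter> V) + measure CM (- V)"
    by (rule measure_Un_le) (use Us Vc in auto)
  also have "measure CM (- V) \<le> measure CM A"
    by (rule finite_measure_mono[OF UV(4) assms(1)])
  finally show ?thesis using UV by auto
qed


unbundle cardinal_syntax

definition Phi :: "(nat \<Rightarrow> bool list set) \<Rightarrow> (nat \<Rightarrow> bool) set" where
  "Phi f = (\<Inter>n. \<Union> (cyl ` f n))"

lemma null_base: assumes "B \<in> null_sets CM" shows "\<exists>f. B \<subseteq> Phi f \<and> Phi f \<in> null_sets CM"
proof -
  interpret prob_space CM by (rule cantor_prob)
  have Bs: "B \<in> sets CM" and B0: "measure CM B = 0" using assms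
    by (auto simp: null_sets_def emeasure_eq_measure)
  have "\<forall>n. \<exists>U. isopen U \<and> B \<subseteq> U \<and> measure CM U \<le> inverse (real (Suc n))"
    using outer_approx[OF Bs] B0 by simp
  from choice[OF this] obtain U where U0: "\<forall>n. isopen (U n) \<and> B \<subseteq> U n \<and> measure CM (U n) \<le> inverse (real (Suc n))"
    by blast
  then have U: "\<And>n. isopen (U n)" "\<And>n. B \<subseteq> U n" "\<And>n. measure CM (U n) \<le> inverse (real (Suc n))"
    by auto
  define f where "f n = {zs. cyl zs \<subseteq> U n}" for n
  have fU: "\<Union> (cyl ` f n) = U n" for n unfolding f_def using isopen_eq[OF U(1)] by simp
  have Pf: "Phi f = (\<Inter>n. U n)" unfolding Phi_def fU ..
  have Ps: "Phi f \<in> sets CM" unfolding Pf using isopen_sets[OF U(1)] by blast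
  have le: "measure CM (Phi f) \<le> inverse (real (Suc n))" for n
  proof -
    have "measure CM (Phi f) \<le> measure CM (U n)"
      by (rule finite_measure_mono) (auto simp: Pf isopen_sets[OF U(1)])
    then show ?thesis using U(3)[of n] by linarith
  qed
  have "measure CM (Phi f) \<le> 0"
    using LIMSEQ_inverse_real_of_nat le by (intro LIMSEQ_le_const) auto
  then have "measure CM (Phi f) = 0" using measure_nonneg[of CM "Phi f"] by linarith
  then have "Phi f \<in> null_sets CM" using Ps by (simp add: emeasure_eq_measure null_setsI)
  moreover have "B \<subseteq> Phi f" unfolding Pf using U(2) by blast
  ultimately show ?thesis by blast
qed

lemma card_fun_le: "|UNIV :: (nat \<Rightarrow> bool list set) set| \<le>o |UNIV :: (nat \<Rightarrow> bool) set|"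
proof -
  define g :: "(nat \<Rightarrow> bool list set) \<Rightarrow> (nat \<Rightarrow> bool)" where
    "g f = (\<lambda>k. from_nat (snd (prod_decode k)) \<in> f (fst (prod_decode k)))" for f
  have "inj g"
  proof (rule injI)
    fix f f' assume eq: "g f = g f'"
    show "f = f'"
    proof (rule ext, rule set_eqI)
      fix n :: nat and zs :: "bool list"
      have "g f (prod_encode (n, to_nat zs)) = g f' (prod_encode (n, to_nat zs))" using eq by simp
      then show "zs \<in> f n \<longleftrightarrow> zs \<in> f' n" by (simp add: g_def)
    qed
  qed
  then show ?thesis using card_of_ordLeq[of UNIV UNIV] by blast
qed

lemma card_range_Phi: "|range Phi| \<le>o |UNIV :: (nat \<Rightarrow> bool) set|"
  using card_of_image[of Phi UNIV] card_fun_le by (rule ordLeq_transitive)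

lemma cof_le_c: "\<exists>G. G \<subseteq> null_ideal \<and> (\<forall>N\<in>null_ideal. \<exists>B\<in>G. N \<subseteq> B) \<and> |G| \<le>o |UNIV :: (nat \<Rightarrow> bool) set|"
proof -
  define G where "G = {C \<in> range Phi. C \<in> null_sets CM}"
  have "G \<subseteq> null_ideal" unfolding G_def null_ideal_def by blast
  moreover have "\<forall>N\<in>null_ideal. \<exists>B\<in>G. N \<subseteq> B"
  proof
    fix N assume "N \<in> null_ideal"
    then obtain B where B: "B \<in> null_sets CM" "N \<subseteq> B" unfolding null_ideal_def by blast
    obtain f where "B \<subseteq> Phi f" "Phi f \<in> null_sets CM" using null_base[OF B(1)] by blast
    then show "\<exists>B\<in>G. N \<subseteq> B" unfolding G_def using B(2) by blast
  qed
  moreover have "|G| \<le>o |UNIV :: (nat \<Rightarrow> bool) set|"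
    using card_of_mono1[of G "range Phi"] card_range_Phi unfolding G_def
    by (blast intro: ordLeq_transitive)
  ultimately show ?thesis by blast
qed


unbundle cardinal_syntax

lemma min_card_ex:
  assumes "Q F0"
  shows "Q (SOME F. Q F \<and> (\<forall>F'. Q F' \<longrightarrow> ordLeq2 (card_of F) (card_of F'))) \<and>
         (\<forall>F'. Q F' \<longrightarrow> ordLeq2 (card_of (SOME F. Q F \<and> (\<forall>F'. Q F' \<longrightarrow> ordLeq2 (card_of F) (card_of F')))) (card_of F'))"
proof -
  let ?R = "card_of ` {F. Q F}"
  have "?R \<noteq> {}" using assms by blast
  moreover have "\<forall>r\<in>?R. Card_order r" using card_of_Card_order by blast
  ultimately obtain r where r: "r \<in> ?R" "\<forall>r'\<in>?R. r \<le>o r'"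
    using exists_minim_Card_order[of ?R] by blast
  then obtain F where "Q F" "r = card_of F" by blast
  then have "\<exists>F. Q F \<and> (\<forall>F'. Q F' \<longrightarrow> ordLeq2 (card_of F) (card_of F'))" using r(2) by blast
  from someI_ex[OF this] show ?thesis by blast
qed

lemma null_ideal_sub: "N \<in> null_ideal \<Longrightarrow> M \<subseteq> N \<Longrightarrow> M \<in> null_ideal"
  unfolding null_ideal_def by blast

lemma null_ideal_Un: assumes "N \<in> null_ideal" "M \<in> null_ideal" shows "N \<union> M \<in> null_ideal"
proof -
  obtain A B where "A \<in> null_sets CM" "N \<subseteq> A" "B \<in> null_sets CM" "M \<subseteq> B"
    using assms unfolding null_ideal_def by blast
  then have "A \<union> B \<in> null_sets CM" "N \<union> M \<subseteq> A \<union> B" by auto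
  then show ?thesis unfolding null_ideal_def by blast
qed

lemma null_ideal_fin_Union: assumes "finite F" "F \<subseteq> null_ideal" shows "\<Union>F \<in> null_ideal"
proof -
  have "\<forall>q\<in>F. \<exists>B. B \<in> null_sets CM \<and> q \<subseteq> B" using assms(2) unfolding null_ideal_def by blast
  then obtain B where B: "\<And>q. q \<in> F \<Longrightarrow> B q \<in> null_sets CM \<and> q \<subseteq> B q" by metis
  have "(\<Union>q\<in>F. B q) \<in> null_sets CM"
    using B assms(1) by (intro null_sets_UN') (auto intro: countable_finite)
  moreover have "\<Union>F \<subseteq> (\<Union>q\<in>F. B q)" using B by blast
  ultimately show ?thesis unfolding null_ideal_def by blast
qed

lemma tr_back: "tr x (tr t x) = t"
  unfolding tr_def by (rule ext) (rename_tac i, case_tac "x i"; case_tac "t i"; simp)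

lemma infinite_cantor: "infinite (UNIV :: (nat \<Rightarrow> bool) set)"
proof -
  have "inj (\<lambda>n::nat. \<lambda>i::nat. i = n)" by (rule injI) (metis)
  then show ?thesis using infinite_UNIV_nat by (meson finite_imageD finite_subset subset_UNIV)
qed

abbreviation "cofnull G \<equiv> G \<subseteq> null_ideal \<and> (\<forall>N\<in>null_ideal. \<exists>B\<in>G. N \<subseteq> B)"

lemma hard:
  assumes comp: "comparable_family (null_ideal - {{}}) (\<subseteq>) F"
  shows "\<exists>G. cofnull G \<and> ordLeq2 (card_of G) (card_of F)"
proof -
  have FP: "F \<subseteq> null_ideal - {{}}" and cmp: "\<And>p. p \<in> null_ideal - {{}} \<Longrightarrow> \<exists>q\<in>F. p \<subseteq> q \<or> q \<subseteq> p"
    using comp unfolding comparable_family_def by auto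
  have "{undefined} \<in> null_ideal - {{}}" using singleton_null by auto
  then have Fne: "F \<noteq> {}" using cmp by blast
  show ?thesis
  proof (cases "ordLeq2 (card_of (UNIV :: (nat \<Rightarrow> bool) set)) (card_of F)")
    case True
    obtain G where "cofnull G" "ordLeq2 (card_of G) (card_of (UNIV :: (nat \<Rightarrow> bool) set))"
      using cof_le_c by blast
    then show ?thesis using True by (blast intro: ordLeq_transitive)
  next
    case False
    define xq where "xq q = (SOME x. x \<in> q)" for q :: "(nat \<Rightarrow> bool) set"
    have xq: "xq q \<in> q" if "q \<in> F" for q
    proof -
      have "q \<noteq> {}" using that FP by auto
      then obtain y where "y \<in> q" by blast
      then show ?thesis unfolding xq_def by (rule someI[of "\<lambda>x. x \<in> q"])
    qed
    define X where "X = xq ` F"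
    define D where "D = (\<lambda>(a, b). tr a b) ` (X \<times> X)"
    have XX: "X \<times> X = (\<lambda>(p, q). (xq p, xq q)) ` (F \<times> F)" unfolding X_def by auto
    have DF: "ordLeq2 (card_of D) (card_of (F \<times> F))"
    proof -
      have "ordLeq2 (card_of D) (card_of (X \<times> X))" unfolding D_def by (rule card_of_image)
      moreover have "ordLeq2 (card_of (X \<times> X)) (card_of (F \<times> F))" unfolding XX by (rule card_of_image)
      ultimately show ?thesis by (rule ordLeq_transitive)
    qed
    have "D \<noteq> UNIV"
    proof
      assume DU: "D = UNIV"
      show False
      proof (cases "finite F")
        case True
        then have "finite D" unfolding D_def X_def by auto
        then show False using DU infinite_cantor by simp
      next
        case inf: False
        have "ordIso2 (card_of (F \<times> F)) (card_of F)"
          using card_of_Times_infinite[OF inf Fne card_of_mono1[OF subset_refl]] by blast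
        then have "ordLeq2 (card_of (UNIV :: (nat \<Rightarrow> bool) set)) (card_of F)"
          using DF DU by (metis ordLeq_ordIso_trans)
        then show False using False by blast
      qed
    qed
    then obtain t where t: "t \<notin> D" by blast
    have disj: "X \<inter> tr t ` X = {}"
    proof (rule ccontr)
      assume "X \<inter> tr t ` X \<noteq> {}"
      then obtain x where x: "x \<in> X" "tr t x \<in> X" by blast
      then have "tr x (tr t x) \<in> D" unfolding D_def by force
      then show False using t tr_back by simp
    qed
    have key: "\<exists>q\<in>F. N \<subseteq> q \<union> X" if N: "N \<in> null_ideal" for N
    proof (cases "N - X = {}")
      case True then show ?thesis using Fne by blast
    next
      case False
      have "N - X \<in> null_ideal - {{}}" using False null_ideal_sub[OF N] by blast
      then obtain q where q: "q \<in> F" "N - X \<subseteq> q \<or> q \<subseteq> N - X" using cmp by blast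
      have "\<not> q \<subseteq> N - X" using xq[OF q(1)] q(1) unfolding X_def by blast
      then have "N - X \<subseteq> q" using q(2) by blast
      then show ?thesis using q(1) by blast
    qed
    have Fnull: "q \<in> null_ideal" if "q \<in> F" for q using that FP by blast
    have cover: "\<exists>q1\<in>F. \<exists>q2\<in>F. N \<subseteq> q1 \<union> tr t ` q2" if N: "N \<in> null_ideal" for N
    proof -
      obtain q1 where q1: "q1 \<in> F" "N \<subseteq> q1 \<union> X" using key[OF N] by blast
      obtain q2 where q2: "q2 \<in> F" "tr t ` N \<subseteq> q2 \<union> X" using key[OF tr_null_ideal[OF N]] by blast
      have "N \<subseteq> q1 \<union> tr t ` q2"
      proof
        fix x assume "x \<in> N"
        then have a: "x \<in> q1 \<union> X" and b: "tr t x \<in> q2 \<union> X" using q1 q2 by auto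
        have b': "x \<in> tr t ` q2 \<union> tr t ` X"
          using b image_eqI[of x "tr t" "tr t x"] by auto
        show "x \<in> q1 \<union> tr t ` q2" using a b' disj by blast
      qed
      then show ?thesis using q1 q2 by blast
    qed
    show ?thesis
    proof (cases "finite F")
      case True
      define Z where "Z = \<Union>F \<union> tr t ` (\<Union>F)"
      have UF: "\<Union>F \<in> null_ideal" using null_ideal_fin_Union[OF True] Fnull by blast
      have Zn: "Z \<in> null_ideal" unfolding Z_def using UF tr_null_ideal null_ideal_Un by blast
      have "cofnull {Z}"
      proof (intro conjI ballI)
        show "{Z} \<subseteq> null_ideal" using Zn by simp
        fix N assume "N \<in> null_ideal"
        then obtain q1 q2 where "q1 \<in> F" "q2 \<in> F" "N \<subseteq> q1 \<union> tr t ` q2" using cover by blast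
        then have "N \<subseteq> Z" unfolding Z_def by blast
        then show "\<exists>B\<in>{Z}. N \<subseteq> B" by blast
      qed
      moreover have "ordLeq2 (card_of {Z}) (card_of F)" by (rule card_of_singl_ordLeq[OF Fne])
      ultimately show ?thesis by blast
    next
      case inf: False
      define G where "G = (\<lambda>(q1, q2). q1 \<union> tr t ` q2) ` (F \<times> F)"
      have "cofnull G"
      proof (intro conjI ballI)
        show "G \<subseteq> null_ideal" unfolding G_def using Fnull tr_null_ideal null_ideal_Un by auto
        fix N assume "N \<in> null_ideal"
        then obtain q1 q2 where "q1 \<in> F" "q2 \<in> F" "N \<subseteq> q1 \<union> tr t ` q2" using cover by blast
        moreover have "q1 \<union> tr t ` q2 \<in> G" unfolding G_def using \<open>q1 \<in> F\<close> \<open>q2 \<in> F\<close>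
          by (intro image_eqI[of _ _ "(q1, q2)"]) auto
        ultimately show "\<exists>B\<in>G. N \<subseteq> B" by blast
      qed
      moreover have "ordLeq2 (card_of G) (card_of F)"
      proof -
        have "ordLeq2 (card_of G) (card_of (F \<times> F))" unfolding G_def by (rule card_of_image)
        moreover have "ordIso2 (card_of (F \<times> F)) (card_of F)"
          using card_of_Times_infinite[OF inf Fne card_of_mono1[OF subset_refl]] by blast
        ultimately show ?thesis by (rule ordLeq_ordIso_trans)
      qed
      ultimately show ?thesis by blast
    qed
  qed
qed

theorem mainTheorem9:
  shows "ordIso2 (cp (null_ideal - {{}}) (\<subseteq>)) cof_null"
proof -
  let ?P = "null_ideal - {{}}"
  let ?Qc = "comparable_family ?P (\<subseteq>)"
  let ?Qn = "\<lambda>F. F \<subseteq> null_ideal \<and> (\<forall>N\<in>null_ideal. \<exists>B\<in>F. N \<subseteq> B)"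
  define Fc where "Fc = (SOME F. ?Qc F \<and> (\<forall>F'. ?Qc F' \<longrightarrow> ordLeq2 (card_of F) (card_of F')))"
  define Fn where "Fn = (SOME F. ?Qn F \<and> (\<forall>F'. ?Qn F' \<longrightarrow> ordLeq2 (card_of F) (card_of F')))"
  have cpe: "cp ?P (\<subseteq>) = card_of Fc" unfolding cp_def min_card_def Fc_def ..
  have cne: "cof_null = card_of Fn" unfolding cof_null_def min_card_def Fn_def ..
  have "?Qc ?P" unfolding comparable_family_def by blast
  from min_card_ex[of ?Qc, OF this] have Fc: "?Qc Fc" "\<And>F'. ?Qc F' \<Longrightarrow> ordLeq2 (card_of Fc) (card_of F')"
    unfolding Fc_def by blast+
  have "?Qn null_ideal" by blast
  from min_card_ex[of ?Qn, OF this] have Fn: "?Qn Fn" "\<And>F'. ?Qn F' \<Longrightarrow> ordLeq2 (card_of Fn) (card_of F')"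
    unfolding Fn_def by blast+
  have c1: "ordLeq2 (card_of Fc) (card_of Fn)"
  proof -
    have "?Qc (Fn - {{}})"
      unfolding comparable_family_def
    proof (intro conjI ballI)
      show "Fn - {{}} \<subseteq> ?P" using Fn(1) by blast
      fix p assume p: "p \<in> ?P"
      then obtain B where "B \<in> Fn" "p \<subseteq> B" using Fn(1) by blast
      then show "\<exists>q\<in>Fn - {{}}. p \<subseteq> q \<or> q \<subseteq> p" using p by blast
    qed
    then have "ordLeq2 (card_of Fc) (card_of (Fn - {{}}))" by (rule Fc(2))
    moreover have "ordLeq2 (card_of (Fn - {{}})) (card_of Fn)" by (rule card_of_mono1) blast
    ultimately show ?thesis by (rule ordLeq_transitive)
  qed
  have c2: "ordLeq2 (card_of Fn) (card_of Fc)"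
  proof -
    obtain G where "cofnull G" "ordLeq2 (card_of G) (card_of Fc)" using hard[OF Fc(1)] by blast
    then show ?thesis using Fn(2) by (blast intro: ordLeq_transitive)
  qed
  show ?thesis unfolding cpe cne using c1 c2 ordIso_iff_ordLeq by blast
qed


end
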